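(* Let $n\geq 2$, $\Lambda=U^{\oplus 3}\oplus E_8(-1)^{\oplus 2}\oplus\mathbb{Z}\ell$ with $(\ell,\ell)=-2(n-1)$, let $\gamma$ be a positive divisor of $2(n-1)$, $a$ an integer coprime to $\gamma$, and $t$ an integer with $d:=\gamma^2t-(n-1)a^2>0$; set $h=\gamma(e+tf)-a\ell$. Then restriction $O(\Lambda,h)\to O(\Lambda_h)$ induces an isomorphism $\widetilde{O}(\Lambda,h)\cong\widetilde{O}(\Lambda_h)$.
   Context: $e,f$ is the standard basis of the first copy of $U$. $\Lambda_h=h^\perp\subset\Lambda$. For an even lattice $L$, $D(L)=L^\vee/L$ is its discriminant group and $\widetilde{O}(L)$ is the group of isometries of $L$ inducing the identity on $D(L)$. $O(\Lambda,h)$ is the stabilizer of $h$ in $O(\Lambda)$ and $\widetilde{O}(\Lambda,h)=\widetilde{O}(\Lambda)\cap O(\Lambda,h)$. Here $h$ is primitive of square $2d$ and divisibility $\gamma$. *)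

theory Defs
  imports Complex_Main "HOL-Algebra.Group"
begin

text \<open>Lambda = U^3 + E8(-1)^2 + Z l, (l,l) = -2(n-1), realised inside Q^23
  (rational vectors nat => rat supported on {..<23}).  Coordinates:
  0..5 = three copies of U (basis e,f of the first copy = coordinates 0,1),
  6..13 and 14..21 = two copies of E8(-1), 22 = l.\<close>

type_synonym qvec = "nat \<Rightarrow> rat"

definition e8 :: "nat \<Rightarrow> nat \<Rightarrow> int" where
  "e8 i j = (if i = j then 2
     else if {i, j} \<in> {{0,1},{1,2},{2,3},{3,4},{4,5},{5,6},{4,7}} then -1 else 0)"

definition gram :: "int \<Rightarrow> nat \<Rightarrow> nat \<Rightarrow> int" where
  "gram n i j =
    (if i < 6 \<and> j < 6 then (if i div 2 = j div 2 \<and> i \<noteq> j then 1 else 0)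
     else if 6 \<le> i \<and> i < 14 \<and> 6 \<le> j \<and> j < 14 then - e8 (i - 6) (j - 6)
     else if 14 \<le> i \<and> i < 22 \<and> 14 \<le> j \<and> j < 22 then - e8 (i - 14) (j - 14)
     else if i = 22 \<and> j = 22 then - 2 * (n - 1)
     else 0)"

definition bil :: "int \<Rightarrow> qvec \<Rightarrow> qvec \<Rightarrow> rat" where
  "bil n x y = (\<Sum>i<23. \<Sum>j<23. x i * of_int (gram n i j) * y j)"

definition Lam :: "qvec set" where
  "Lam = {x. (\<forall>i. x i \<in> \<int>) \<and> (\<forall>i\<ge>23. x i = 0)}"

definition uvec :: "nat \<Rightarrow> qvec" where
  "uvec k = (\<lambda>i. if i = k then 1 else 0)"

definition e_vec :: qvec where "e_vec = uvec 0"
definition f_vec :: qvec where "f_vec = uvec 1"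
definition ell :: qvec where "ell = uvec 22"

definition hvec :: "int \<Rightarrow> int \<Rightarrow> int \<Rightarrow> qvec" where
  "hvec \<gamma> t a = (\<lambda>i. of_int \<gamma> * (e_vec i + of_int t * f_vec i) - of_int a * ell i)"

definition Lam_h :: "int \<Rightarrow> qvec \<Rightarrow> qvec set" where
  "Lam_h n h = {x \<in> Lam. bil n x h = 0}"

definition qspan :: "qvec set \<Rightarrow> qvec set" where
  "qspan L = {x. \<exists>m::nat. m > 0 \<and> (\<lambda>i. of_nat m * x i) \<in> L}"

definition dual :: "int \<Rightarrow> qvec set \<Rightarrow> qvec set" where
  "dual n L = {x \<in> qspan L. \<forall>v\<in>L. bil n x v \<in> \<int>}"

definition isometries :: "int \<Rightarrow> qvec set \<Rightarrow> (qvec \<Rightarrow> qvec) set" where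
  "isometries n L = {g. bij_betw g L L
      \<and> (\<forall>x\<in>L. \<forall>y\<in>L. g (\<lambda>i. x i + y i) = (\<lambda>i. g x i + g y i))
      \<and> (\<forall>x\<in>L. \<forall>y\<in>L. bil n (g x) (g y) = bil n x y)
      \<and> (\<forall>x. x \<notin> L \<longrightarrow> g x = x)}"

text \<open>Q-linear extension of g to L tensor Q\<close>
definition qext :: "qvec set \<Rightarrow> (qvec \<Rightarrow> qvec) \<Rightarrow> qvec \<Rightarrow> qvec" where
  "qext L g x = (let m = (LEAST m::nat. m > 0 \<and> (\<lambda>i. of_nat m * x i) \<in> L)
                 in (\<lambda>i. g (\<lambda>j. of_nat m * x j) i / of_nat m))"

text \<open>tilde O(L): isometries acting trivially on D(L) = L^vee / L\<close>
definition Otilde :: "int \<Rightarrow> qvec set \<Rightarrow> (qvec \<Rightarrow> qvec) set" where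
  "Otilde n L = {g \<in> isometries n L. \<forall>x\<in>dual n L. (\<lambda>i. qext L g x i - x i) \<in> L}"

definition O_stab :: "int \<Rightarrow> qvec set \<Rightarrow> qvec \<Rightarrow> (qvec \<Rightarrow> qvec) set" where
  "O_stab n L h = {g \<in> isometries n L. g h = h}"

definition Otilde_stab :: "int \<Rightarrow> qvec set \<Rightarrow> qvec \<Rightarrow> (qvec \<Rightarrow> qvec) set" where
  "Otilde_stab n L h = Otilde n L \<inter> O_stab n L h"

definition restr :: "qvec set \<Rightarrow> (qvec \<Rightarrow> qvec) \<Rightarrow> (qvec \<Rightarrow> qvec)" where
  "restr M g = (\<lambda>x. if x \<in> M then g x else x)"

definition map_grp :: "(qvec \<Rightarrow> qvec) set \<Rightarrow> (qvec \<Rightarrow> qvec) monoid" where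
  "map_grp S = \<lparr>carrier = S, mult = (\<lambda>g g'. g \<circ> g'), one = id\<rparr>"

end

theory Submission imports Defs "HOL-Library.Function_Algebras"
begin

declare plus_fun_apply[simp del] zero_fun_apply[simp del] times_fun_apply[simp del]
  minus_apply[simp del] uminus_apply[simp del]

definition sv :: "rat \<Rightarrow> qvec \<Rightarrow> qvec" where "sv c x = (\<lambda>i. c * x i)"

lemma sv_apply: "sv c x i = c * x i" by (simp add: sv_def)
lemmas pw = plus_fun_apply zero_fun_apply minus_apply uminus_apply sv_apply
lemma plus_lam: "(\<lambda>i. x i + y i) = x + (y::qvec)" by (simp add: plus_fun_def)
lemma sv_lam: "(\<lambda>i. c * x i) = sv c x" by (simp add: sv_def)

lemma sv_add: "sv c (x + y) = sv c x + sv c y" by (simp add: pw fun_eq_iff algebra_simps)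
lemma sv_sv: "sv c (sv d x) = sv (c*d) x" by (simp add: pw fun_eq_iff algebra_simps)
lemma sv_one[simp]: "sv 1 x = x" by (simp add: pw fun_eq_iff)
lemma sv_zero[simp]: "sv 0 x = 0" "sv c 0 = 0" by (simp_all add: pw fun_eq_iff)
lemma sv_neg: "sv (-c) x = - sv c x" by (simp add: pw fun_eq_iff)
lemma sv_distr: "sv (c+d) x = sv c x + sv d x" by (simp add: pw fun_eq_iff algebra_simps)
lemma sv_minus: "sv c (x - y) = sv c x - sv c y" by (simp add: pw fun_eq_iff algebra_simps)

definition sgrp :: "qvec set \<Rightarrow> bool" where
  "sgrp L \<longleftrightarrow> 0 \<in> L \<and> (\<forall>x\<in>L. \<forall>y\<in>L. x + y \<in> L) \<and> (\<forall>x\<in>L. -x \<in> L)"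

definition addv :: "qvec set \<Rightarrow> (qvec \<Rightarrow> qvec) \<Rightarrow> bool" where
  "addv L g \<longleftrightarrow> (\<forall>x\<in>L. \<forall>y\<in>L. g (x + y) = g x + g y)"

lemma iso_addv: "g \<in> isometries n L \<Longrightarrow> addv L g"
  by (simp add: isometries_def addv_def plus_lam)

context fixes L g assumes S: "sgrp L" and A: "addv L g"
begin

lemma sg0: "0 \<in> L" and sgadd: "x \<in> L \<Longrightarrow> y \<in> L \<Longrightarrow> x + y \<in> L"
  and sgneg: "x \<in> L \<Longrightarrow> -x \<in> L"
  using S by (auto simp: sgrp_def)

lemma sgdiff: "x \<in> L \<Longrightarrow> y \<in> L \<Longrightarrow> x - y \<in> L"
  using sgadd[of x "-y"] sgneg[of y] by simp

lemma g0: "g 0 = 0"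
proof -
  have "g (0 + 0) = g 0 + g 0" using A sg0 unfolding addv_def by blast
  then show ?thesis by simp
qed

lemma gneg: "x \<in> L \<Longrightarrow> g (-x) = - g x"
proof -
  assume x: "x \<in> L"
  have "g (x + -x) = g x + g (-x)" using A x sgneg[OF x] unfolding addv_def by blast
  then show ?thesis using g0 minus_unique[of "g x" "g (-x)"] by simp
qed

lemma gadd: "x \<in> L \<Longrightarrow> y \<in> L \<Longrightarrow> g (x + y) = g x + g y"
  using A by (simp add: addv_def)

lemma gdiff: "x \<in> L \<Longrightarrow> y \<in> L \<Longrightarrow> g (x - y) = g x - g y"
  using gadd[of x "-y"] gneg[of y] sgneg[of y] by simp

lemma nat_scale: "x \<in> L \<Longrightarrow> sv (of_nat k) x \<in> L \<and> g (sv (of_nat k) x) = sv (of_nat k) (g x)"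
proof (induction k)
  case 0
  have e: "sv (of_nat 0) y = 0" for y by (simp add: pw fun_eq_iff)
  show ?case unfolding e using sg0 g0 by blast
next
  case (Suc k)
  have e: "sv (of_nat (Suc k)) y = y + sv (of_nat k) y" for y by (simp add: pw fun_eq_iff algebra_simps)
  have ih: "sv (of_nat k) x \<in> L" "g (sv (of_nat k) x) = sv (of_nat k) (g x)" using Suc by auto
  show ?case unfolding e using sgadd[OF Suc.prems ih(1)] gadd[OF Suc.prems ih(1)] ih(2) by simp
qed

lemma int_scale: "x \<in> L \<Longrightarrow> sv (of_int k) x \<in> L \<and> g (sv (of_int k) x) = sv (of_int k) (g x)"
proof (cases "k \<ge> 0")
  case True
  assume x: "x \<in> L"
  then show ?thesis using nat_scale[OF x, of "nat k"] True by simp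
next
  case False
  assume x: "x \<in> L"
  have k: "(of_int k::rat) = - of_nat (nat (-k))" using False by simp
  show ?thesis unfolding k sv_neg using nat_scale[OF x, of "nat (-k)"] sgneg gneg by simp
qed

lemma qspan_iff: "x \<in> qspan L \<longleftrightarrow> (\<exists>m::nat. m > 0 \<and> sv (of_nat m) x \<in> L)"
  by (simp add: qspan_def sv_lam)

lemma qext_char:
  assumes m: "m > 0" and mx: "sv (of_nat m) x \<in> L"
  shows "qext L g x = sv (1 / of_nat m) (g (sv (of_nat m) x))"
proof -
  define m0 where "m0 = (LEAST m::nat. m > 0 \<and> sv (of_nat m) x \<in> L)"
  have "m0 > 0 \<and> sv (of_nat m0) x \<in> L"
    unfolding m0_def by (rule LeastI[of _ m]) (use m mx in auto)
  then have m0: "m0 > 0" "sv (of_nat m0) x \<in> L" by auto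
  have q0: "qext L g x = (\<lambda>i. g (sv (of_nat m0) x) i / of_nat m0)"
    unfolding qext_def Let_def sv_lam m0_def ..
  have q: "qext L g x = sv (1 / of_nat m0) (g (sv (of_nat m0) x))"
    unfolding q0 by (simp add: pw fun_eq_iff)
  have e: "sv (of_nat m) (sv (of_nat m0) x) = sv (of_nat m0) (sv (of_nat m) x)"
    by (simp add: sv_sv mult.commute)
  have "sv (of_nat m) (g (sv (of_nat m0) x)) = sv (of_nat m0) (g (sv (of_nat m) x))"
    using nat_scale[OF m0(2), of m] nat_scale[OF mx, of m0] e by simp
  then have "\<And>i. of_nat m * g (sv (of_nat m0) x) i = of_nat m0 * g (sv (of_nat m) x) i"
    by (simp add: pw fun_eq_iff)
  then show ?thesis unfolding q using m m0
    by (simp add: pw fun_eq_iff divide_simps) (metis mult.commute)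
qed

lemma qext_L: "x \<in> L \<Longrightarrow> qext L g x = g x"
  using qext_char[of 1 x] by simp

lemma L_qspan: "x \<in> L \<Longrightarrow> x \<in> qspan L"
  unfolding qspan_iff by (rule exI[of _ 1]) simp

lemma qspan_common:
  assumes "x \<in> qspan L" "y \<in> qspan L"
  shows "\<exists>m::nat. m > 0 \<and> sv (of_nat m) x \<in> L \<and> sv (of_nat m) y \<in> L"
proof -
  obtain m1 m2 :: nat where m: "m1 > 0" "sv (of_nat m1) x \<in> L" "m2 > 0" "sv (of_nat m2) y \<in> L"
    using assms unfolding qspan_iff by blast
  have "sv (of_nat (m1*m2)) x = sv (of_nat m2) (sv (of_nat m1) x)"
    "sv (of_nat (m1*m2)) y = sv (of_nat m1) (sv (of_nat m2) y)" by (simp_all add: sv_sv mult.commute)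
  then show ?thesis using nat_scale m by (intro exI[of _ "m1*m2"]) auto
qed

lemma qspan_add: "x \<in> qspan L \<Longrightarrow> y \<in> qspan L \<Longrightarrow> x + y \<in> qspan L"
  using qspan_common[of x y] sgadd unfolding qspan_iff by (metis sv_add)

lemma qext_add: assumes "x \<in> qspan L" "y \<in> qspan L"
  shows "qext L g (x + y) = qext L g x + qext L g y"
proof -
  obtain m::nat where m: "m > 0" "sv (of_nat m) x \<in> L" "sv (of_nat m) y \<in> L"
    using qspan_common[OF assms] by blast
  have "sv (of_nat m) (x + y) \<in> L" using m sgadd by (simp add: sv_add)
  then have "qext L g (x + y) = sv (1 / of_nat m) (g (sv (of_nat m) (x+y)))"
    using qext_char m by blast
  also have "\<dots> = qext L g x + qext L g y"
    using qext_char[OF m(1) m(2)] qext_char[OF m(1) m(3)] gadd[OF m(2,3)] by (simp add: sv_add)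
  finally show ?thesis .
qed

lemma qspan_sv: assumes "x \<in> qspan L" shows "sv c x \<in> qspan L \<and> qext L g (sv c x) = sv c (qext L g x)"
proof -
  obtain m::nat where m: "m > 0" "sv (of_nat m) x \<in> L" using assms qspan_iff by blast
  obtain p q where pq: "quotient_of c = (p, q)" by fastforce
  have q: "q > 0" using pq quotient_of_denom_pos by blast
  have c: "c = of_int p / of_int q" using pq quotient_of_div by blast
  define k where "k = m * nat q"
  have k: "k > 0" using m q by (simp add: k_def)
  have e: "sv (of_nat k) (sv c x) = sv (of_int p) (sv (of_nat m) x)"
    using q by (simp add: k_def sv_sv c fun_eq_iff pw)
  have kin: "sv (of_nat k) (sv c x) \<in> L" unfolding e using int_scale m by blast
  then have "sv c x \<in> qspan L" using k qspan_iff by blast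
  moreover have "qext L g (sv c x) = sv (1 / of_nat k) (g (sv (of_nat k) (sv c x)))"
    using qext_char[OF k kin] .
  moreover have "g (sv (of_nat k) (sv c x)) = sv (of_int p) (g (sv (of_nat m) x))"
    unfolding e using int_scale m by blast
  moreover have "qext L g x = sv (1 / of_nat m) (g (sv (of_nat m) x))" using qext_char m by blast
  ultimately show ?thesis using q m by (simp add: sv_sv c k_def field_simps)
qed

lemma qext_maps: assumes "g ` L \<subseteq> L" "x \<in> qspan L" shows "qext L g x \<in> qspan L"
proof -
  obtain m::nat where m: "m > 0" "sv (of_nat m) x \<in> L" using assms qspan_iff by blast
  have "sv (of_nat m) (qext L g x) = g (sv (of_nat m) x)" using qext_char[OF m] m
    by (simp add: sv_sv)
  then show ?thesis using m assms(1) qspan_iff by auto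
qed

end


section \<open>The bilinear form\<close>

lemma bil_add_l: "bil n (x + y) z = bil n x z + bil n y z"
  by (simp add: bil_def pw algebra_simps sum.distrib)
lemma bil_add_r: "bil n z (x + y) = bil n z x + bil n z y"
  by (simp add: bil_def pw algebra_simps sum.distrib)
lemma bil_sv_l: "bil n (sv c x) y = c * bil n x y"
  by (simp add: bil_def pw algebra_simps sum_distrib_left)
lemma bil_sv_r: "bil n x (sv c y) = c * bil n x y"
  by (simp add: bil_def pw algebra_simps sum_distrib_left)
lemma bil_neg_l: "bil n (- x) y = - bil n x y"
  by (simp add: bil_def pw sum_negf)
lemma bil_neg_r: "bil n x (- y) = - bil n x y"
  by (simp add: bil_def pw sum_negf)
lemma bil_diff_l: "bil n (x - y) z = bil n x z - bil n y z"
  using bil_add_l[of n x "-y" z] bil_neg_l[of n y z] by simp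
lemma bil_diff_r: "bil n z (x - y) = bil n z x - bil n z y"
  using bil_add_r[of n z x "-y"] bil_neg_r[of n z y] by simp
lemma bil_zero[simp]: "bil n 0 y = 0" "bil n x 0 = 0"
  by (simp_all add: bil_def pw)

lemma gram_sym: "gram n i j = gram n j i"
  unfolding gram_def e8_def by (auto simp: insert_commute)

lemma bil_sym: "bil n x y = bil n y x"
  unfolding bil_def
  by (subst sum.swap) (simp add: gram_sym mult.commute mult.left_commute)

lemma gram_0: "gram n i 0 = (if i = 1 then 1 else 0)"
  by (auto simp: gram_def)
lemma gram_1: "gram n i (Suc 0) = (if i = 0 then 1 else 0)"
  by (auto simp: gram_def)
lemma gram_22: "gram n i 22 = (if i = 22 then - 2 * (n - 1) else 0)"
  by (auto simp: gram_def)

lemma bil_uvec: "k < 23 \<Longrightarrow> bil n x (uvec k) = (\<Sum>i<23. x i * of_int (gram n i k))"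
  unfolding bil_def uvec_def by (simp add: if_distrib cong: if_cong)

lemma bil_e: "bil n x e_vec = x 1"
  unfolding e_vec_def by (simp add: bil_uvec gram_0 if_distrib cong: if_cong)
lemma bil_f: "bil n x f_vec = x 0"
  unfolding f_vec_def by (simp add: bil_uvec gram_1 if_distrib cong: if_cong)
lemma bil_ell: "bil n x ell = - 2 * (of_int n - 1) * x 22"
  unfolding ell_def by (simp add: bil_uvec gram_22 if_distrib cong: if_cong)

lemma hvec_eq: "hvec g t a = sv (of_int g) e_vec + sv (of_int g * of_int t) f_vec - sv (of_int a) ell"
  by (simp add: hvec_def fun_eq_iff pw algebra_simps)

lemma bil_h: "bil n x (hvec g t a) = of_int g * x 1 + of_int g * of_int t * x 0 + 2 * (of_int n - 1) * of_int a * x 22"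
  unfolding hvec_eq by (simp add: bil_add_r bil_diff_r bil_sv_r bil_e bil_f bil_ell algebra_simps)

lemma hvec_comp: "hvec g t a 0 = of_int g" "hvec g t a (Suc 0) = of_int g * of_int t" "hvec g t a 22 = - of_int a"
  unfolding hvec_def e_vec_def f_vec_def ell_def uvec_def by simp_all

lemma bil_hh: "bil n (hvec g t a) (hvec g t a) = 2 * of_int (g^2 * t - (n - 1) * a^2)"
  by (simp add: bil_h hvec_comp algebra_simps power2_eq_square)

lemma bil_fh: "bil n f_vec (hvec g t a) = of_int g"
  by (simp add: bil_h f_vec_def uvec_def)

section \<open>Lattices\<close>

lemma Lam_iff: "x \<in> Lam \<longleftrightarrow> (\<forall>i. x i \<in> \<int>) \<and> (\<forall>i\<ge>23. x i = 0)"
  by (simp add: Lam_def)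

lemma sgrp_Lam: "sgrp Lam"
  unfolding sgrp_def by (auto simp: pw Lam_iff)

lemma sgrp_Lam_h: "sgrp (Lam_h n h)"
  using sgrp_Lam unfolding sgrp_def Lam_h_def by (auto simp: bil_add_l bil_neg_l)

lemma Lam_h_sub: "Lam_h n h \<subseteq> Lam"
  by (auto simp: Lam_h_def)

lemma hvec_Lam: "hvec g t a \<in> Lam"
  unfolding Lam_iff hvec_def e_vec_def f_vec_def ell_def uvec_def by auto

lemma f_Lam: "f_vec \<in> Lam"
  unfolding Lam_iff f_vec_def uvec_def by auto

lemma bil_Lam_int: "x \<in> Lam \<Longrightarrow> y \<in> Lam \<Longrightarrow> bil n x y \<in> \<int>"
  unfolding bil_def Lam_iff by (intro Ints_sum Ints_mult) auto

lemma common_denom: "finite S \<Longrightarrow> \<exists>m::nat. m > 0 \<and> (\<forall>i\<in>S. of_nat m * x i \<in> (\<int>::rat set))"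
proof (induction S rule: finite_induct)
  case empty then show ?case by (intro exI[of _ 1]) auto
next
  case (insert j S)
  then obtain m::nat where m: "m > 0" "\<forall>i\<in>S. of_nat m * x i \<in> (\<int>::rat set)" by blast
  obtain p q where pq: "quotient_of (x j) = (p, q)" by fastforce
  have q: "q > 0" using pq quotient_of_denom_pos by blast
  have c: "x j = of_int p / of_int q" using pq quotient_of_div by blast
  have "of_nat (m * nat q) * x j = of_int (int m * p)" using q by (simp add: c)
  then have hj: "of_nat (m * nat q) * x j \<in> (\<int>::rat set)" by (metis Ints_of_int)
  moreover have "of_nat (m * nat q) * x i \<in> (\<int>::rat set)" if "i \<in> S" for i
  proof -
    have "of_nat (m * nat q) * x i = of_int q * (of_nat m * x i)" using q by simp
    then show ?thesis using m(2) that by (metis Ints_mult Ints_of_int)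
  qed
  ultimately show ?case using m(1) q by (intro exI[of _ "m * nat q"]) (simp del: of_nat_mult)
qed

lemma denom_Lam: assumes "\<forall>i\<ge>23. x i = 0" shows "\<exists>m::nat. m > 0 \<and> sv (of_nat m) x \<in> Lam"
proof -
  obtain m::nat where m: "m > 0" "\<forall>i\<in>{..<23}. of_nat m * x i \<in> (\<int>::rat set)"
    using common_denom[of "{..<23}" x] by auto
  have "sv (of_nat m) x \<in> Lam" unfolding Lam_iff
  proof (intro conjI allI impI)
    fix i show "sv (of_nat m) x i \<in> \<int>"
      using m(2) assms by (cases "i < 23") (auto simp: pw)
  next
    fix i :: nat assume "i \<ge> 23" then show "sv (of_nat m) x i = 0" using assms by (simp add: pw)
  qed
  then show ?thesis using m by blast
qed

lemma qspan_Lam: "x \<in> qspan Lam \<longleftrightarrow> (\<forall>i\<ge>23. x i = 0)"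
proof
  assume "x \<in> qspan Lam"
  then obtain m::nat where "m > 0" "sv (of_nat m) x \<in> Lam" by (auto simp: qspan_def sv_lam)
  then show "\<forall>i\<ge>23. x i = 0" by (auto simp: Lam_iff pw)
next
  assume "\<forall>i\<ge>23. x i = 0"
  then show "x \<in> qspan Lam" using denom_Lam by (auto simp: qspan_def sv_lam)
qed

lemma qspan_Lam_h: "x \<in> qspan (Lam_h n h) \<longleftrightarrow> (\<forall>i\<ge>23. x i = 0) \<and> bil n x h = 0"
proof
  assume "x \<in> qspan (Lam_h n h)"
  then obtain m::nat where "m > 0" "sv (of_nat m) x \<in> Lam_h n h" by (auto simp: qspan_def sv_lam)
  then show "(\<forall>i\<ge>23. x i = 0) \<and> bil n x h = 0" by (auto simp: Lam_iff pw Lam_h_def bil_sv_l)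
next
  assume a: "(\<forall>i\<ge>23. x i = 0) \<and> bil n x h = 0"
  then obtain m::nat where "m > 0" "sv (of_nat m) x \<in> Lam" using denom_Lam by blast
  then show "x \<in> qspan (Lam_h n h)" using a by (auto simp: qspan_def sv_lam Lam_h_def bil_sv_l)
qed

lemma minus_lam: "(\<lambda>i. x i - y i) = x - (y::qvec)" by (simp add: fun_eq_iff pw)

lemma qext_same:
  assumes "sgrp L1" "addv L1 g1" "sgrp L2" "addv L2 g2" "m > 0"
    "sv (of_nat m) x \<in> L1" "sv (of_nat m) x \<in> L2" "g1 (sv (of_nat m) x) = g2 (sv (of_nat m) x)"
  shows "qext L1 g1 x = qext L2 g2 x"
  using qext_char[OF assms(1,2,5,6)] qext_char[OF assms(3,4,5,7)] assms(8) by simp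

lemma qext_bil:
  assumes S: "sgrp L" and A: "addv L g" and B: "\<forall>x\<in>L. \<forall>y\<in>L. bil n (g x) (g y) = bil n x y"
    and x: "x \<in> qspan L" and y: "y \<in> qspan L"
  shows "bil n (qext L g x) (qext L g y) = bil n x y"
proof -
  obtain m::nat where m: "m > 0" "sv (of_nat m) x \<in> L" "sv (of_nat m) y \<in> L"
    using qspan_common[OF S A x y] by blast
  have "bil n (qext L g x) (qext L g y)
      = bil n (sv (1 / of_nat m) (g (sv (of_nat m) x))) (sv (1 / of_nat m) (g (sv (of_nat m) y)))"
    using qext_char[OF S A m(1) m(2)] qext_char[OF S A m(1) m(3)] by simp
  also have "\<dots> = (1 / of_nat m) * (1 / of_nat m) * bil n (sv (of_nat m) x) (sv (of_nat m) y)"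
    using B m by (simp add: bil_sv_l bil_sv_r)
  also have "\<dots> = bil n x y" using m(1) by (simp add: bil_sv_l bil_sv_r)
  finally show ?thesis .
qed

lemma hvec_supp: "i \<ge> 23 \<Longrightarrow> hvec g t a i = 0"
  by (simp add: hvec_def e_vec_def f_vec_def ell_def uvec_def)

lemma addv_id: "addv L id" by (simp add: addv_def)

lemma Lam_int_scale: "x \<in> Lam \<Longrightarrow> sv (of_int k) x \<in> Lam"
  using int_scale[OF sgrp_Lam addv_id] by blast

lemma Lam_diff: "x \<in> Lam \<Longrightarrow> y \<in> Lam \<Longrightarrow> x - y \<in> Lam"
  using sgdiff[OF sgrp_Lam addv_id] by blast

lemma Lam_add: "x \<in> Lam \<Longrightarrow> y \<in> Lam \<Longrightarrow> x + y \<in> Lam"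
  using sgadd[OF sgrp_Lam addv_id] by blast

locale S = fixes n \<gamma> a t :: int
  assumes gpos: "\<gamma> > 0" and gdvd: "\<gamma> dvd 2 * (n - 1)" and dpos: "\<gamma>^2 * t - (n - 1) * a^2 > 0"
begin

abbreviation "h \<equiv> hvec \<gamma> t a"
abbreviation "M \<equiv> Lam_h n h"

lemma hh_nz: "bil n h h \<noteq> 0"
proof -
  have "\<gamma>^2*t - (n-1)*a^2 \<noteq> 0" using dpos by simp
  then show ?thesis unfolding bil_hh by (simp only: mult_eq_0_iff of_int_eq_0_iff) simp
qed

lemma bil_h_div: assumes "x \<in> Lam" shows "\<exists>k::int. bil n x h = of_int \<gamma> * of_int k"
proof -
  obtain c where c: "2 * (n - 1) = \<gamma> * c" using gdvd by blast
  have "x 1 \<in> \<int>" "x 0 \<in> \<int>" "x 22 \<in> \<int>" using assms by (auto simp: Lam_iff)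
  then obtain x1 x0 x22 where xs: "x 1 = of_int x1" "x 0 = of_int x0" "x 22 = of_int x22"
    by (metis Ints_cases)
  have c': "2 * (of_int n - 1) = (of_int \<gamma> * of_int c :: rat)" using arg_cong[OF c, of "of_int :: int \<Rightarrow> rat"] by simp
  have "bil n x h = of_int \<gamma> * of_int (x1 + t * x0 + c * a * x22)"
    unfolding bil_h using xs c' by (simp add: algebra_simps)
  then show ?thesis by blast
qed

lemma M_iff: "x \<in> M \<longleftrightarrow> x \<in> Lam \<and> bil n x h = 0" by (simp add: Lam_h_def)

lemma restr_iso: assumes g: "g \<in> O_stab n Lam h" shows "restr M g \<in> isometries n M"
proof -
  have bij: "bij_betw g Lam Lam" and ad: "\<And>x y. x \<in> Lam \<Longrightarrow> y \<in> Lam \<Longrightarrow> g (x + y) = g x + g y"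
    and bp: "\<And>x y. x \<in> Lam \<Longrightarrow> y \<in> Lam \<Longrightarrow> bil n (g x) (g y) = bil n x y"
    and gh: "g h = h"
    using g by (auto simp: O_stab_def isometries_def plus_lam)
  have gL: "x \<in> Lam \<Longrightarrow> g x \<in> Lam" for x using bij by (auto simp: bij_betw_def)
  have bh: "x \<in> Lam \<Longrightarrow> bil n (g x) h = bil n x h" for x using bp[of x h] gh hvec_Lam by simp
  have gM: "x \<in> M \<Longrightarrow> g x \<in> M" for x using gL bh by (auto simp: M_iff)
  have R: "x \<in> M \<Longrightarrow> restr M g x = g x" for x by (simp add: restr_def)
  have "bij_betw (restr M g) M M"
    unfolding bij_betw_def
  proof
    show "inj_on (restr M g) M" using bij Lam_h_sub R unfolding bij_betw_def inj_on_def by (metis subsetD)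
    show "restr M g ` M = M"
    proof
      show "restr M g ` M \<subseteq> M" using gM R by auto
      show "M \<subseteq> restr M g ` M"
      proof
        fix y assume y: "y \<in> M"
        then have "y \<in> Lam" by (simp add: M_iff)
        then obtain x where x: "x \<in> Lam" "y = g x" using bij by (auto simp: bij_betw_def)
        then have "x \<in> M" using y bh by (simp add: M_iff)
        then show "y \<in> restr M g ` M" using x R by auto
      qed
    qed
  qed
  moreover have "\<forall>x\<in>M. \<forall>y\<in>M. restr M g (\<lambda>i. x i + y i) = (\<lambda>i. restr M g x i + restr M g y i)"
  proof (intro ballI)
    fix x y assume xy: "x \<in> M" "y \<in> M"
    then have "x + y \<in> M" using sgrp_Lam_h unfolding sgrp_def by blast
    then show "restr M g (\<lambda>i. x i + y i) = (\<lambda>i. restr M g x i + restr M g y i)"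
      unfolding plus_lam using xy R ad by (auto simp: M_iff)
  qed
  moreover have "\<forall>x\<in>M. \<forall>y\<in>M. bil n (restr M g x) (restr M g y) = bil n x y"
    using R bp by (auto simp: M_iff)
  moreover have "\<forall>x. x \<notin> M \<longrightarrow> restr M g x = x" by (simp add: restr_def)
  ultimately show ?thesis unfolding isometries_def by blast
qed

lemma restr_Otilde: assumes g: "g \<in> Otilde_stab n Lam h" shows "restr M g \<in> Otilde n M"
proof -
  have gO: "g \<in> O_stab n Lam h" using g by (simp add: Otilde_stab_def)
  have gI: "g \<in> isometries n Lam" and gh: "g h = h"
    and D: "\<And>x. x \<in> dual n Lam \<Longrightarrow> qext Lam g x - x \<in> Lam"
    using g by (auto simp: Otilde_stab_def Otilde_def O_stab_def minus_lam)
  have bp: "\<And>x y. x \<in> Lam \<Longrightarrow> y \<in> Lam \<Longrightarrow> bil n (g x) (g y) = bil n x y"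
    using gI by (auto simp: isometries_def)
  have RI: "restr M g \<in> isometries n M" using restr_iso[OF gO] .
  have AL: "addv Lam g" using iso_addv[OF gI] .
  have AM: "addv M (restr M g)" using iso_addv[OF RI] .
  have "\<forall>y\<in>dual n M. qext M (restr M g) y - y \<in> M"
  proof
    fix y assume y: "y \<in> dual n M"
    then have yq: "y \<in> qspan M" and yint: "\<And>v. v \<in> M \<Longrightarrow> bil n y v \<in> \<int>"
      by (auto simp: dual_def)
    have ysupp: "\<forall>i\<ge>23. y i = 0" and yh: "bil n y h = 0" using yq by (auto simp: qspan_Lam_h)
    obtain m::nat where m: "m > 0" "sv (of_nat m) y \<in> M"
      using yq qspan_iff[OF sgrp_Lam_h AM] by blast
    have mL: "sv (of_nat m) y \<in> Lam" using m(2) by (simp add: M_iff)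
    have Q1: "qext M (restr M g) y = qext Lam g y"
      by (rule qext_same[OF sgrp_Lam_h AM sgrp_Lam AL m(1) m(2) mL]) (simp add: restr_def m(2))
    define c where "c = bil n y f_vec / of_int \<gamma>"
    define xs where "xs = y + sv (- c) h"
    have yqL: "y \<in> qspan Lam" using ysupp by (simp add: qspan_Lam)
    have hqL: "sv (- c) h \<in> qspan Lam" using hvec_supp by (simp add: qspan_Lam pw)
    have xsq: "xs \<in> qspan Lam" using ysupp hvec_supp by (simp add: qspan_Lam pw xs_def)
    have "\<forall>v\<in>Lam. bil n xs v \<in> \<int>"
    proof
      fix v assume v: "v \<in> Lam"
      obtain k::int where k: "bil n v h = of_int \<gamma> * of_int k" using bil_h_div[OF v] by blast
      define w where "w = v - sv (of_int k) f_vec"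
      have wL: "w \<in> Lam" unfolding w_def using Lam_diff[OF v Lam_int_scale[OF f_Lam]] .
      have "bil n w h = 0" unfolding w_def using k by (simp add: bil_diff_l bil_sv_l bil_fh)
      then have "w \<in> M" using wL by (simp add: M_iff)
      then have "bil n y w \<in> \<int>" using yint by blast
      moreover have "bil n y w = bil n xs v"
        unfolding w_def xs_def c_def using gpos
        by (simp add: bil_diff_r bil_sv_r bil_add_l bil_sv_l bil_sym[of n h v] k)
      ultimately show "bil n xs v \<in> \<int>" by simp
    qed
    then have "xs \<in> dual n Lam" using xsq by (simp add: dual_def)
    then have D1: "qext Lam g xs - xs \<in> Lam" using D by blast
    have "qext Lam g xs = qext Lam g y + sv (- c) (qext Lam g h)"
      unfolding xs_def using qext_add[OF sgrp_Lam AL yqL hqL] qspan_sv[OF sgrp_Lam AL L_qspan[OF sgrp_Lam AL hvec_Lam]]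
      by simp
    also have "\<dots> = qext Lam g y + sv (- c) h" using qext_L[OF sgrp_Lam AL hvec_Lam] gh by simp
    finally have "qext Lam g xs - xs = qext Lam g y - y" unfolding xs_def by simp
    then have inL: "qext Lam g y - y \<in> Lam" using D1 by simp
    have "qext Lam g y = sv (1 / of_nat m) (g (sv (of_nat m) y))"
      using qext_char[OF sgrp_Lam AL m(1) mL] .
    then have "bil n (qext Lam g y) h = (1 / of_nat m) * bil n (g (sv (of_nat m) y)) (g h)"
      using gh by (simp add: bil_sv_l)
    also have "\<dots> = 0" using bp[OF mL hvec_Lam] m(2) by (simp add: M_iff)
    finally have "bil n (qext Lam g y - y) h = 0" using yh by (simp add: bil_diff_l)
    then show "qext M (restr M g) y - y \<in> M" using inL Q1 by (simp add: M_iff)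
  qed
  then show ?thesis using RI by (simp add: Otilde_def minus_lam)
qed

lemma restr_inj:
  assumes g1: "g1 \<in> O_stab n Lam h" and g2: "g2 \<in> O_stab n Lam h" and eq: "restr M g1 = restr M g2"
  shows "g1 = g2"
proof
  fix x
  have I1: "g1 \<in> isometries n Lam" "g1 h = h" and I2: "g2 \<in> isometries n Lam" "g2 h = h"
    using g1 g2 by (auto simp: O_stab_def)
  have A1: "addv Lam g1" and A2: "addv Lam g2" using I1 I2 iso_addv by auto
  show "g1 x = g2 x"
  proof (cases "x \<in> Lam")
    case False then show ?thesis using I1 I2 by (simp add: isometries_def)
  next
    case True
    obtain b::int where b: "bil n x h = of_int b" using bil_Lam_int[OF True hvec_Lam] by (metis Ints_cases)
    define D::int where "D = 2 * (\<gamma>^2 * t - (n - 1) * a^2)"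
    have D: "bil n h h = of_int D" "D \<noteq> 0" using dpos by (simp_all add: bil_hh D_def)
    define w where "w = sv (of_int D) x - sv (of_int b) h"
    have wL: "w \<in> Lam" unfolding w_def using Lam_diff Lam_int_scale True hvec_Lam by blast
    have "bil n w h = 0" unfolding w_def by (simp add: bil_diff_l bil_sv_l b D)
    then have wM: "w \<in> M" using wL by (simp add: M_iff)
    have hL: "sv (of_int b) h \<in> Lam" using Lam_int_scale hvec_Lam by blast
    have ex: "sv (of_int D) x = w + sv (of_int b) h" unfolding w_def by simp
    have "g1 w = g2 w" using wM fun_cong[OF eq, of w] unfolding restr_def by simp
    moreover have "g1 (sv (of_int D) x) = g1 w + sv (of_int b) h"
      unfolding ex gadd[OF sgrp_Lam A1 wL hL] using int_scale[OF sgrp_Lam A1 hvec_Lam, of b] I1(2) by simp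
    moreover have "g2 (sv (of_int D) x) = g2 w + sv (of_int b) h"
      unfolding ex gadd[OF sgrp_Lam A2 wL hL] using int_scale[OF sgrp_Lam A2 hvec_Lam, of b] I2(2) by simp
    ultimately have "g1 (sv (of_int D) x) = g2 (sv (of_int D) x)" by simp
    then have "sv (of_int D) (g1 x) = sv (of_int D) (g2 x)"
      using int_scale[OF sgrp_Lam A1 True, of D] int_scale[OF sgrp_Lam A2 True, of D] by simp
    then show ?thesis using D(2) by (simp add: fun_eq_iff pw)
  qed
qed

definition cc :: "qvec \<Rightarrow> rat" where "cc x = bil n x h / bil n h h"
definition Pj :: "qvec \<Rightarrow> qvec" where "Pj x = x - sv (cc x) h"
definition ext :: "(qvec \<Rightarrow> qvec) \<Rightarrow> qvec \<Rightarrow> qvec" where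
  "ext g x = (if x \<in> Lam then qext M g (Pj x) + sv (cc x) h else x)"

lemma Pj_h: "bil n (Pj x) h = 0"
  using hh_nz by (simp add: Pj_def cc_def bil_diff_l bil_sv_l)

lemma x_decomp: "x = Pj x + sv (cc x) h" by (simp add: Pj_def)

lemma cc_add: "cc (x + y) = cc x + cc y" by (simp add: cc_def bil_add_l add_divide_distrib)
lemma cc_sv: "cc (sv c x) = c * cc x" by (simp add: cc_def bil_sv_l)
lemma cc_h: "cc h = 1" using hh_nz by (simp add: cc_def)
lemma Pj_add: "Pj (x + y) = Pj x + Pj y" by (simp add: Pj_def cc_add sv_distr)
lemma Pj_sv: "Pj (sv c x) = sv c (Pj x)" by (simp add: Pj_def cc_sv sv_minus sv_sv)
lemma Pj_h0: "Pj h = 0" by (simp add: Pj_def cc_h)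
lemma cc_M: "x \<in> M \<Longrightarrow> cc x = 0" by (simp add: cc_def M_iff)
lemma Pj_M: "x \<in> M \<Longrightarrow> Pj x = x" by (simp add: Pj_def cc_M)

lemma Pj_supp: "\<forall>i\<ge>23. x i = 0 \<Longrightarrow> Pj x \<in> qspan M"
  using hvec_supp Pj_h by (simp add: qspan_Lam_h Pj_def pw)

lemma Pj_dual: assumes "\<forall>i\<ge>23. x i = 0" "\<forall>v\<in>M. bil n x v \<in> \<int>" shows "Pj x \<in> dual n M"
proof -
  have "\<forall>v\<in>M. bil n (Pj x) v \<in> \<int>"
  proof
    fix v assume v: "v \<in> M"
    then have "bil n h v = 0" using bil_sym[of n h v] by (simp add: M_iff)
    then show "bil n (Pj x) v \<in> \<int>" using assms(2) v by (simp add: Pj_def bil_diff_l bil_sv_l)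
  qed
  then show ?thesis using Pj_supp[OF assms(1)] by (simp add: dual_def)
qed

lemma Lam_supp: "x \<in> Lam \<Longrightarrow> \<forall>i\<ge>23. x i = 0" by (simp add: Lam_iff)

lemma Pj_dual_Lam: "x \<in> Lam \<Longrightarrow> Pj x \<in> dual n M"
  by (rule Pj_dual) (auto simp: Lam_supp M_iff bil_Lam_int)

lemma bil_split: assumes "bil n p h = 0" "bil n q h = 0"
  shows "bil n (p + sv c1 h) (q + sv c2 h) = bil n p q + c1 * c2 * bil n h h"
  using assms bil_sym[of n h q] by (simp add: bil_add_l bil_add_r bil_sv_l bil_sv_r)

context fixes g assumes gT: "g \<in> Otilde n M"
begin

lemma gI: "g \<in> isometries n M" using gT by (simp add: Otilde_def)
lemma AM: "addv M g" using iso_addv[OF gI] .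
lemma bijM: "bij_betw g M M" using gI by (simp add: isometries_def)
lemma gMM: "x \<in> M \<Longrightarrow> g x \<in> M" using bijM by (auto simp: bij_betw_def)
lemma bpM: "x \<in> M \<Longrightarrow> y \<in> M \<Longrightarrow> bil n (g x) (g y) = bil n x y" using gI by (simp add: isometries_def)
lemma outM: "x \<notin> M \<Longrightarrow> g x = x" using gI by (simp add: isometries_def)
lemma DM: "y \<in> dual n M \<Longrightarrow> qext M g y - y \<in> M" using gT by (simp add: Otilde_def minus_lam)

lemma Qadd: "p \<in> qspan M \<Longrightarrow> q \<in> qspan M \<Longrightarrow> qext M g (p + q) = qext M g p + qext M g q"
  using qext_add[OF sgrp_Lam_h AM] by blast
lemma Qsv: "p \<in> qspan M \<Longrightarrow> qext M g (sv c p) = sv c (qext M g p)"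
  using qspan_sv[OF sgrp_Lam_h AM] by blast
lemma Qq: "p \<in> qspan M \<Longrightarrow> qext M g p \<in> qspan M"
  using qext_maps[OF sgrp_Lam_h AM] gMM by blast
lemma Qh: "p \<in> qspan M \<Longrightarrow> bil n (qext M g p) h = 0"
  using Qq by (simp add: qspan_Lam_h)
lemma Qbil: "p \<in> qspan M \<Longrightarrow> q \<in> qspan M \<Longrightarrow> bil n (qext M g p) (qext M g q) = bil n p q"
  using qext_bil[OF sgrp_Lam_h AM] bpM by blast

lemma PjL: "x \<in> Lam \<Longrightarrow> Pj x \<in> qspan M" using Pj_supp Lam_supp by blast

lemma ext_Lam: assumes x: "x \<in> Lam" shows "ext g x = x + (qext M g (Pj x) - Pj x)" "ext g x \<in> Lam"
proof -
  show e: "ext g x = x + (qext M g (Pj x) - Pj x)"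
    using x x_decomp[of x] by (simp add: ext_def Pj_def)
  have "qext M g (Pj x) - Pj x \<in> M" using DM Pj_dual_Lam[OF x] by blast
  then show "ext g x \<in> Lam" unfolding e using x Lam_add by (simp add: M_iff)
qed

lemma ext_add: assumes x: "x \<in> Lam" and y: "y \<in> Lam" shows "ext g (x + y) = ext g x + ext g y"
proof -
  have "x + y \<in> Lam" using Lam_add x y by blast
  then have "ext g (x + y) = qext M g (Pj x + Pj y) + sv (cc x + cc y) h"
    by (simp add: ext_def Pj_add cc_add)
  also have "\<dots> = ext g x + ext g y"
    using x y Qadd[OF PjL[OF x] PjL[OF y]] by (simp add: ext_def sv_distr algebra_simps)
  finally show ?thesis .
qed

lemma ext_bil: assumes x: "x \<in> Lam" and y: "y \<in> Lam" shows "bil n (ext g x) (ext g y) = bil n x y"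
proof -
  have "bil n (ext g x) (ext g y) = bil n (qext M g (Pj x) + sv (cc x) h) (qext M g (Pj y) + sv (cc y) h)"
    using x y by (simp add: ext_def)
  also have "\<dots> = bil n (Pj x) (Pj y) + cc x * cc y * bil n h h"
    using bil_split Qh PjL x y Qbil by simp
  also have "\<dots> = bil n (Pj x + sv (cc x) h) (Pj y + sv (cc y) h)"
    using bil_split Pj_h by simp
  also have "\<dots> = bil n x y" using x_decomp[symmetric] by simp
  finally show ?thesis .
qed

lemma ext_h: "ext g h = h"
proof -
  have "qext M g 0 = 0" using qext_L[OF sgrp_Lam_h AM sg0[OF sgrp_Lam_h AM]] g0[OF sgrp_Lam_h AM] by simp
  then show ?thesis using hvec_Lam by (simp add: ext_def Pj_h0 cc_h)
qed

lemma restr_ext: "restr M (ext g) = g"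
proof
  fix x show "restr M (ext g) x = g x"
  proof (cases "x \<in> M")
    case True
    then have "x \<in> Lam" by (simp add: M_iff)
    then show ?thesis using True qext_L[OF sgrp_Lam_h AM True]
      by (simp add: restr_def ext_def Pj_M cc_M)
  next
    case False then show ?thesis by (simp add: restr_def outM)
  qed
qed

lemma AL: "addv Lam (ext g)" using ext_add by (simp add: addv_def)

lemma ext_inj: "inj_on (ext g) Lam"
proof
  fix x y assume x: "x \<in> Lam" and y: "y \<in> Lam" and e: "ext g x = ext g y"
  define z where "z = x - y"
  have z: "z \<in> Lam" using Lam_diff x y by (simp add: z_def)
  have "ext g z = 0" using gdiff[OF sgrp_Lam AL x y] e by (simp add: z_def)
  then have ez: "qext M g (Pj z) + sv (cc z) h = 0" using z by (simp add: ext_def)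
  then have "bil n (qext M g (Pj z) + sv (cc z) h) h = 0" by simp
  then have "cc z * bil n h h = 0" using Qh[OF PjL[OF z]] by (simp add: bil_add_l bil_sv_l)
  then have c0: "cc z = 0" using hh_nz by simp
  then have Q0: "qext M g (Pj z) = 0" using ez by simp
  obtain m::nat where m: "m > 0" "sv (of_nat m) (Pj z) \<in> M"
    using PjL[OF z] qspan_iff[OF sgrp_Lam_h AM] by blast
  have "sv (1 / of_nat m) (g (sv (of_nat m) (Pj z))) = 0"
    using Q0 qext_char[OF sgrp_Lam_h AM m] by simp
  then have "g (sv (of_nat m) (Pj z)) = 0" using m(1) by (simp add: fun_eq_iff pw)
  also have "\<dots> = g 0" using g0[OF sgrp_Lam_h AM] by simp
  finally have "sv (of_nat m) (Pj z) = 0"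
    using bijM m(2) sg0[OF sgrp_Lam_h AM] unfolding bij_betw_def inj_on_def by blast
  then have "Pj z = 0" using m(1) by (simp add: fun_eq_iff pw)
  then have "z = 0" using x_decomp[of z, symmetric] c0 by simp
  then show "x = y" by (simp add: z_def)
qed

lemma ext_surj: assumes z: "z \<in> Lam" shows "\<exists>x\<in>Lam. ext g x = z"
proof -
  define q where "q = Pj z"
  have qd: "q \<in> dual n M" using Pj_dual_Lam[OF z] by (simp add: q_def)
  have qq: "q \<in> qspan M" using qd by (simp add: dual_def)
  obtain m::nat where m: "m > 0" "sv (of_nat m) q \<in> M"
    using qq qspan_iff[OF sgrp_Lam_h AM] by blast
  have "sv (of_nat m) q \<in> g ` M" using bijM m(2) by (simp add: bij_betw_def)
  then obtain w where w: "w \<in> M" "g w = sv (of_nat m) q" by (metis imageE)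
  define r where "r = sv (1 / of_nat m) w"
  have smr: "sv (of_nat m) r = w" using m(1) by (simp add: r_def sv_sv)
  then have rq: "r \<in> qspan M" using w(1) m(1) qspan_iff[OF sgrp_Lam_h AM] by blast
  have Qr: "qext M g r = q" using qext_char[OF sgrp_Lam_h AM m(1), of r] smr w m(1) by (simp add: sv_sv)
  have rd: "r \<in> dual n M"
  proof -
    have "\<forall>v\<in>M. bil n r v \<in> \<int>"
    proof
      fix v assume v: "v \<in> M"
      have "bil n r v = bil n (qext M g r) (qext M g v)"
        using Qbil[OF rq L_qspan[OF sgrp_Lam_h AM v]] by simp
      also have "\<dots> = bil n q (g v)" using Qr qext_L[OF sgrp_Lam_h AM v] by simp
      finally show "bil n r v \<in> \<int>" using qd gMM[OF v] by (simp add: dual_def)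
    qed
    then show ?thesis using rq by (simp add: dual_def)
  qed
  have qr: "q - r \<in> M" using DM[OF rd] Qr by simp
  have rh: "bil n r h = 0" using rq by (simp add: qspan_Lam_h)
  define x where "x = r + sv (cc z) h"
  have "x = z - (q - r)" unfolding x_def q_def Pj_def by (simp add: algebra_simps)
  then have xL: "x \<in> Lam" using Lam_diff[OF z] qr by (simp add: M_iff)
  have "cc r = 0" by (simp add: cc_def rh)
  then have ccx: "cc x = cc z" by (simp add: x_def cc_add cc_sv cc_h)
  have Pjx: "Pj x = r" unfolding Pj_def ccx by (simp add: x_def)
  have "ext g x = z" using xL x_decomp[of z, symmetric] by (simp add: ext_def Pjx ccx Qr q_def)
  then show ?thesis using xL by blast
qed

lemma ext_Otilde: "ext g \<in> Otilde_stab n Lam h"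
proof -
  have bij: "bij_betw (ext g) Lam Lam"
    unfolding bij_betw_def using ext_inj ext_Lam(2) ext_surj by blast
  have iso: "ext g \<in> isometries n Lam"
    unfolding isometries_def using bij ext_add ext_bil by (simp add: plus_lam ext_def)
  have "\<forall>x\<in>dual n Lam. qext Lam (ext g) x - x \<in> Lam"
  proof
    fix x assume x: "x \<in> dual n Lam"
    then have xq: "x \<in> qspan Lam" and xi: "\<And>v. v \<in> Lam \<Longrightarrow> bil n x v \<in> \<int>"
      by (auto simp: dual_def)
    have xs: "\<forall>i\<ge>23. x i = 0" using xq by (simp add: qspan_Lam)
    obtain m::nat where m: "m > 0" "sv (of_nat m) x \<in> Lam" using xq qspan_iff[OF sgrp_Lam AL] by blast
    have Px: "Pj x \<in> qspan M" using Pj_supp xs by blast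
    have "qext Lam (ext g) x = sv (1 / of_nat m) (ext g (sv (of_nat m) x))"
      using qext_char[OF sgrp_Lam AL m] .
    also have "\<dots> = sv (1 / of_nat m) (sv (of_nat m) (qext M g (Pj x)) + sv (of_nat m * cc x) h)"
      using m(2) Qsv[OF Px] by (simp add: ext_def Pj_sv cc_sv)
    also have "\<dots> = qext M g (Pj x) + sv (cc x) h" using m(1) by (simp add: sv_add sv_sv)
    finally have "qext Lam (ext g) x - x = qext M g (Pj x) - Pj x"
      using x_decomp[of x, symmetric] by (simp add: algebra_simps)
    moreover have "Pj x \<in> dual n M" by (rule Pj_dual) (use xs xi in \<open>auto simp: M_iff\<close>)
    ultimately show "qext Lam (ext g) x - x \<in> Lam" using DM by (simp add: M_iff)
  qed
  then show ?thesis using iso ext_h by (simp add: Otilde_stab_def Otilde_def O_stab_def minus_lam)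
qed

end

lemma restr_comp: assumes g: "g \<in> O_stab n Lam h" and g': "g' \<in> O_stab n Lam h"
  shows "restr M (g \<circ> g') = restr M g \<circ> restr M g'"
proof
  fix x
  show "restr M (g \<circ> g') x = (restr M g \<circ> restr M g') x"
  proof (cases "x \<in> M")
    case True
    have "restr M g' x \<in> M" using restr_iso[OF g'] True by (auto simp: isometries_def bij_betw_def)
    then have "g' x \<in> M" using True by (simp add: restr_def)
    then show ?thesis using True by (simp add: restr_def)
  next
    case False then show ?thesis by (simp add: restr_def)
  qed
qed

lemma main: "restr M ` O_stab n Lam h \<subseteq> isometries n M
   \<and> restr M \<in> iso (map_grp (Otilde_stab n Lam h)) (map_grp (Otilde n M))"
proof -
  have sub: "Otilde_stab n Lam h \<subseteq> O_stab n Lam h" by (auto simp: Otilde_stab_def)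
  have P1: "restr M ` O_stab n Lam h \<subseteq> isometries n M" using restr_iso by blast
  have hom: "restr M \<in> hom (map_grp (Otilde_stab n Lam h)) (map_grp (Otilde n M))"
    unfolding hom_def map_grp_def using restr_Otilde restr_comp sub by auto
  have "bij_betw (restr M) (Otilde_stab n Lam h) (Otilde n M)"
    unfolding bij_betw_def
  proof
    show "inj_on (restr M) (Otilde_stab n Lam h)" using restr_inj sub by (meson inj_onI subsetD)
    show "restr M ` Otilde_stab n Lam h = Otilde n M"
    proof
      show "restr M ` Otilde_stab n Lam h \<subseteq> Otilde n M" using restr_Otilde by blast
      show "Otilde n M \<subseteq> restr M ` Otilde_stab n Lam h"
      proof
        fix g assume g: "g \<in> Otilde n M"
        then show "g \<in> restr M ` Otilde_stab n Lam h"
          using ext_Otilde[OF g] restr_ext[OF g] by (metis image_eqI)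
      qed
    qed
  qed
  then show ?thesis using P1 hom by (simp add: iso_def map_grp_def)
qed

end

theorem proposition3p6:
  fixes n \<gamma> a t :: int
  assumes "n \<ge> 2"
    and "\<gamma> > 0" and "\<gamma> dvd 2 * (n - 1)"
    and "coprime a \<gamma>"
    and "\<gamma>^2 * t - (n - 1) * a^2 > 0"
  shows "restr (Lam_h n (hvec \<gamma> t a)) ` O_stab n Lam (hvec \<gamma> t a)
           \<subseteq> isometries n (Lam_h n (hvec \<gamma> t a))
         \<and> restr (Lam_h n (hvec \<gamma> t a))
           \<in> iso (map_grp (Otilde_stab n Lam (hvec \<gamma> t a)))
                 (map_grp (Otilde n (Lam_h n (hvec \<gamma> t a))))"
proof -
  interpret S n \<gamma> a t using assms by unfold_locales auto
  show ?thesis using main .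
qed

end
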